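(* Let $z=(z_1,\ldots,z_n)\in\mathbb{R}^n$, let $\mathcal{I}=\{i : z_i>0\}$, and let $f_z(a)=\sum_{i=1}^n |z_i-a_i|$ for $a\in\mathbb{R}^n$. Let $d\in DS_n$ be a minimizer of $f_z$ over $DS_n$ such that $d_j>0$ for at least one $j\notin\mathcal{I}$. Then there exists $d^*\in DS_n$ with $d^*_i=0$ for all $i\notin\mathcal{I}$ and $f_z(d^* )=f_z(d)$.
   Context: All graphs are simple (no loops, no multiple edges) on the vertex set $\{1,\ldots,n\}$. The degree sequence of such a graph is the vector $(d_1,\ldots,d_n)$ where $d_i$ is the number of neighbours of vertex $i$. $DS_n$ denotes the set of all degree sequences of simple graphs on $\{1,\ldots,n\}$. *)

theory Defs
  imports Complex_Main
begin

definition simple_graph_on :: "nat \<Rightarrow> (nat \<Rightarrow> nat \<Rightarrow> bool) \<Rightarrow> bool" where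
  "simple_graph_on n E \<longleftrightarrow>
     (\<forall>i j. E i j \<longrightarrow> E j i) \<and> (\<forall>i. \<not> E i i) \<and>
     (\<forall>i j. E i j \<longrightarrow> i \<in> {1..n} \<and> j \<in> {1..n})"

definition degseq :: "nat \<Rightarrow> (nat \<Rightarrow> nat \<Rightarrow> bool) \<Rightarrow> nat \<Rightarrow> nat" where
  "degseq n E = (\<lambda>i. if i \<in> {1..n} then card {j \<in> {1..n}. E i j} else 0)"

definition DS :: "nat \<Rightarrow> (nat \<Rightarrow> nat) set" where
  "DS n = {degseq n E | E. simple_graph_on n E}"

definition fz :: "nat \<Rightarrow> (nat \<Rightarrow> real) \<Rightarrow> (nat \<Rightarrow> nat) \<Rightarrow> real" where
  "fz n z a = (\<Sum>i=1..n. \<bar>z i - real (a i)\<bar>)"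

end

theory Submission
  imports Defs
begin

lemma card_filter_real:
  "finite A \<Longrightarrow> real (card {x\<in>A. P x}) = (\<Sum>x\<in>A. if P x then 1 else 0)"
  by (simp add: sum.inter_filter[symmetric])

theorem lemma4:
  fixes n :: nat and z :: "nat \<Rightarrow> real" and d :: "nat \<Rightarrow> nat"
  assumes "d \<in> DS n"
    and "\<forall>a \<in> DS n. fz n z d \<le> fz n z a"
    and "\<exists>j \<in> {1..n}. \<not> (z j > 0) \<and> d j > 0"
  shows "\<exists>d' \<in> DS n. (\<forall>i \<in> {1..n}. \<not> (z i > 0) \<longrightarrow> d' i = 0) \<and> fz n z d' = fz n z d"
proof -
  obtain E where sg: "simple_graph_on n E" and dE: "d = degseq n E"
    using assms(1) unfolding DS_def by blast
  define E' where "E' = (\<lambda>i j. E i j \<and> 0 < z i \<and> 0 < z j)"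
  define V where "V = {1..n}"
  have fV: "finite V" by (simp add: V_def)
  have sg': "simple_graph_on n E'" using sg unfolding simple_graph_on_def E'_def by blast
  define d' where "d' = degseq n E'"
  have d'DS: "d' \<in> DS n" unfolding DS_def d'_def using sg' by blast
  define e where "e = (\<lambda>i j. if E i j then 1 else (0::real))"
  have esym: "e i j = e j i" for i j using sg unfolding e_def simple_graph_on_def by metis
  have enn: "e i j \<ge> 0" for i j by (simp add: e_def)
  have dr: "real (d i) = (\<Sum>j\<in>V. e i j)" if "i \<in> V" for i
  proof -
    have "real (d i) = real (card {j\<in>V. E i j})" using that by (simp add: dE degseq_def V_def)
    then show ?thesis by (simp add: card_filter_real[OF fV] e_def)
  qed
  have d'r: "real (d' i) = (\<Sum>j\<in>V. if 0 < z i \<and> 0 < z j then e i j else 0)" if "i \<in> V" for i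
  proof -
    have "real (d' i) = real (card {j\<in>V. E' i j})" using that by (simp add: d'_def degseq_def V_def)
    then show ?thesis by (simp add: card_filter_real[OF fV] e_def E'_def; intro sum.cong; auto simp: e_def)
  qed
  have zero: "\<forall>i \<in> {1..n}. \<not> (z i > 0) \<longrightarrow> d' i = 0"
    by (auto simp: d'_def degseq_def E'_def)
  define A where "A = (\<lambda>i. \<Sum>j\<in>V. if 0 < z i \<and> \<not> 0 < z j then e i j else 0)"
  define B where "B = (\<lambda>i. if \<not> 0 < z i then (\<Sum>j\<in>V. e i j) else 0)"
  have pt: "\<bar>z i - real (d' i)\<bar> \<le> \<bar>z i - real (d i)\<bar> + A i - B i" if "i \<in> V" for i
  proof (cases "0 < z i")
    case True
    have "real (d i) = real (d' i) + A i"
      using that True by (simp add: dr d'r A_def sum.distrib[symmetric]; intro sum.cong; auto)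
    moreover have "A i \<ge> 0" unfolding A_def by (intro sum_nonneg) (simp add: enn)
    ultimately show ?thesis using True by (simp add: B_def)
  next
    case False
    have "real (d' i) = 0" using that False by (simp add: d'r)
    moreover have "real (d i) \<ge> 0" by simp
    ultimately show ?thesis using False by (simp add: A_def B_def dr[OF that])
  qed
  have "(\<Sum>i\<in>V. A i) = (\<Sum>j\<in>V. \<Sum>i\<in>V. if 0 < z i \<and> \<not> 0 < z j then e i j else 0)"
    unfolding A_def by (rule sum.swap)
  also have "\<dots> = (\<Sum>j\<in>V. \<Sum>i\<in>V. if 0 < z i \<and> \<not> 0 < z j then e j i else 0)"
    by (intro sum.cong refl) (simp add: esym)
  also have "\<dots> \<le> (\<Sum>j\<in>V. B j)"
    unfolding B_def by (intro sum_mono) (auto intro!: sum_mono simp: enn)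
  finally have AB: "(\<Sum>i\<in>V. A i) \<le> (\<Sum>i\<in>V. B i)" .
  have "fz n z d' \<le> (\<Sum>i\<in>V. \<bar>z i - real (d i)\<bar> + A i - B i)"
    unfolding fz_def V_def[symmetric] by (intro sum_mono pt)
  also have "\<dots> = fz n z d + (\<Sum>i\<in>V. A i) - (\<Sum>i\<in>V. B i)"
    unfolding fz_def V_def[symmetric] by (simp add: sum.distrib sum_subtractf)
  finally have "fz n z d' \<le> fz n z d" using AB by linarith
  moreover have "fz n z d \<le> fz n z d'" using assms(2) d'DS by blast
  ultimately show ?thesis using d'DS zero by force
qed

end
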